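(* Let $n\ge2$ and let $\psi:\mathbb D\to\widetilde\Gamma_n$ be an analytic map such that $\psi(\lambda_0)\in\widetilde{\mathbb G}_n$ for some $\lambda_0\in\mathbb D$. Then $\psi(\mathbb D)\subset\widetilde{\mathbb G}_n$.
   Context: $\mathbb D$ is the open unit disc. $\widetilde{\mathbb G}_n=\{(y_1,\dots,y_{n-1},q)\in\mathbb C^n: q\in\mathbb D,\ y_j=\beta_j+\bar\beta_{n-j}q$ for some $\beta_j\in\mathbb C$ with $|\beta_j|+|\beta_{n-j}|<\binom{n}{j}$, $j=1,\dots,n-1\}$; $\widetilde\Gamma_n$ is its closure. *)

theory Defs
  imports "HOL-Analysis.Analysis"
begin

text \<open>A point of C^n is represented as a function x :: nat \<Rightarrow> complex, where
  x 1, ..., x (n-1) are the coordinates y_1, ..., y_(n-1) and x n is the coordinate q.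
  Coordinates outside {1..n} are irrelevant (membership ignores them).\<close>

definition tetra_G :: "nat \<Rightarrow> (nat \<Rightarrow> complex) set" where
  "tetra_G n = {x. x n \<in> ball 0 1 \<and>
     (\<exists>\<beta> :: nat \<Rightarrow> complex. \<forall>j\<in>{1..n-1}.
        x j = \<beta> j + cnj (\<beta> (n - j)) * x n \<and>
        norm (\<beta> j) + norm (\<beta> (n - j)) < real (n choose j))}"

text \<open>Closure in the product topology of nat \<Rightarrow> complex; since membership in tetra_G
  does not depend on coordinates outside {1..n}, this is the closure in C^n
  (with arbitrary extra coordinates).\<close>
definition tetra_Gamma :: "nat \<Rightarrow> (nat \<Rightarrow> complex) set" where
  "tetra_Gamma n = closure (tetra_G n)"

end

theory Submission
  imports Defs "HOL-Complex_Analysis.Complex_Analysis"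
begin

lemma I1:
  fixes a b q z :: complex and C :: real
  assumes "norm z = 1"
  shows "(norm (b*z - of_real C))^2 - (norm (of_real C*q*z - a))^2
     = C^2*(1 - (norm q)^2) - ((norm a)^2 - (norm b)^2) - 2*C*Re (z*(b - q*cnj a))"
proof -
  have z: "(Re z)^2 + (Im z)^2 = 1" using assms by (simp add: cmod_def)
  show ?thesis
    unfolding cmod_power2
    apply (simp add: power2_eq_square algebra_simps)
    using z unfolding power2_eq_square by algebra
qed

lemma I2:
  fixes a b q :: complex
  shows "(norm (a - q*cnj b))^2 = (norm (b - q*cnj a))^2 + ((norm a)^2 - (norm b)^2)*(1 - (norm q)^2)"
  unfolding cmod_power2 by (simp add: power2_eq_square algebra_simps)

lemma I3:
  fixes a b q :: complex
  shows "of_real (1 - (norm q)^2) * b = (b - q*cnj a) + q * cnj (a - q*cnj b)"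
  unfolding cmod_power2 by (simp add: complex_eq_iff power2_eq_square algebra_simps)

lemma sq_less_imp: "(x::real) \<ge> 0 \<Longrightarrow> y \<ge> 0 \<Longrightarrow> x^2 < y^2 \<Longrightarrow> x < y"
  using power_less_imp_less_base by blast

lemma A2:
  fixes a b q :: complex and C :: real
  assumes q: "norm q < 1" and C: "C > 0"
    and h: "norm (a - q*cnj b) + norm (b - q*cnj a) < C*(1 - (norm q)^2)"
  shows "norm b < C" "\<And>z. norm z = 1 \<Longrightarrow> norm (of_real C*q*z - a) < norm (b*z - of_real C)"
proof -
  define K where "K = 1 - (norm q)^2"
  have K: "K > 0" using q unfolding K_def by (simp add: power_less_one_iff abs_square_less_1)
  define u where "u = a - q*cnj b"
  define v where "v = b - q*cnj a"
  have h': "norm u + norm v < C*K" using h unfolding u_def v_def K_def .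
  have "K * norm b = norm (of_real K * b)" using K by (simp add: norm_mult)
  also have "\<dots> = norm (v + q * cnj u)" using I3[of q b a] unfolding u_def v_def K_def by simp
  also have "\<dots> \<le> norm v + norm q * norm u" using norm_triangle_ineq[of v "q * cnj u"] by (simp add: norm_mult)
  also have "\<dots> \<le> norm v + norm u" using q by (simp add: mult_left_le_one_le)
  finally have "K * norm b < K * C" using h' by (simp add: algebra_simps)
  then show "norm b < C" using K by simp
  have D: "((norm a)^2 - (norm b)^2) < C^2*K - 2*C*norm v"
  proof -
    have "norm u < C*K - norm v" using h' by simp
    then have "(norm u)^2 < (C*K - norm v)^2" by (intro power_strict_mono) auto
    then have "(norm v)^2 + ((norm a)^2 - (norm b)^2)*K < (C*K - norm v)^2"
      using I2[of a q b] unfolding u_def v_def K_def by simp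
    moreover have "(C*K - norm v)^2 = (norm v)^2 + (C^2*K - 2*C*norm v)*K"
      by (simp add: power2_eq_square algebra_simps)
    ultimately have "((norm a)^2 - (norm b)^2)*K < (C^2*K - 2*C*norm v) * K"
      by linarith
    then show ?thesis using K by simp
  qed
  fix z :: complex assume z: "norm z = 1"
  have "Re (z * v) \<le> norm v" using complex_Re_le_cmod[of "z * v"] z by (simp add: norm_mult)
  then have "2*C*Re (z * v) \<le> 2*C*norm v" using C by simp
  then have "(norm (b*z - of_real C))^2 - (norm (of_real C*q*z - a))^2 > 0"
    using I1[OF z, of b C q a] D unfolding v_def K_def by linarith
  then have "(norm (of_real C*q*z - a))^2 < (norm (b*z - of_real C))^2" by linarith
  then show "norm (of_real C*q*z - a) < norm (b*z - of_real C)"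
    using power_less_imp_less_base[OF _ norm_ge_zero] by blast
qed

lemma A1:
  fixes a b q :: complex and C :: real
  assumes q: "norm q < 1" and C: "C > 0"
    and h: "norm (a - q*cnj b) + norm (b - q*cnj a) \<le> C*(1 - (norm q)^2)"
  shows "norm b \<le> C" "\<And>z. norm z = 1 \<Longrightarrow> norm (of_real C*q*z - a) \<le> norm (b*z - of_real C)"
proof -
  define K where "K = 1 - (norm q)^2"
  have K: "K > 0" using q unfolding K_def by (simp add: power_less_one_iff abs_square_less_1)
  define u where "u = a - q*cnj b"
  define v where "v = b - q*cnj a"
  have h': "norm u + norm v \<le> C*K" using h unfolding u_def v_def K_def .
  have "K * norm b = norm (of_real K * b)" using K by (simp add: norm_mult)
  also have "\<dots> = norm (v + q * cnj u)" using I3[of q b a] unfolding u_def v_def K_def by simp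
  also have "\<dots> \<le> norm v + norm q * norm u" using norm_triangle_ineq[of v "q * cnj u"] by (simp add: norm_mult)
  also have "\<dots> \<le> norm v + norm u" using q by (simp add: mult_left_le_one_le)
  finally have "K * norm b \<le> K * C" using h' by (simp add: algebra_simps)
  then show "norm b \<le> C" using K by simp
  have D: "((norm a)^2 - (norm b)^2) \<le> C^2*K - 2*C*norm v"
  proof -
    have "norm u \<le> C*K - norm v" using h' by simp
    then have "(norm u)^2 \<le> (C*K - norm v)^2" by (intro power_mono) auto
    then have "(norm v)^2 + ((norm a)^2 - (norm b)^2)*K \<le> (C*K - norm v)^2"
      using I2[of a q b] unfolding u_def v_def K_def by simp
    moreover have "(C*K - norm v)^2 = (norm v)^2 + (C^2*K - 2*C*norm v)*K"
      by (simp add: power2_eq_square algebra_simps)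
    ultimately have "((norm a)^2 - (norm b)^2)*K \<le> (C^2*K - 2*C*norm v) * K"
      by linarith
    then show ?thesis using K by simp
  qed
  fix z :: complex assume z: "norm z = 1"
  have "Re (z * v) \<le> norm v" using complex_Re_le_cmod[of "z * v"] z by (simp add: norm_mult)
  then have "2*C*Re (z * v) \<le> 2*C*norm v" using C by simp
  then have "(norm (b*z - of_real C))^2 - (norm (of_real C*q*z - a))^2 \<ge> 0"
    using I1[OF z, of b C q a] D unfolding v_def K_def by linarith
  then have "(norm (of_real C*q*z - a))^2 \<le> (norm (b*z - of_real C))^2" by linarith
  then show "norm (of_real C*q*z - a) \<le> norm (b*z - of_real C)"
    using power2_le_imp_le[OF _ norm_ge_zero] by blast
qed

lemma unit_rot: "\<exists>z. norm (z::complex) = 1 \<and> Re (z * v) = norm v"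
proof (cases "v = 0")
  case True then show ?thesis by (intro exI[of _ 1]) auto
next
  case False
  show ?thesis
  proof (intro exI[of _ "cnj v / of_real (norm v)"] conjI)
    show "norm (cnj v / of_real (norm v)) = 1" using False by (simp add: norm_divide)
    have "cnj v / of_real (norm v) * v = of_real (norm v)"
      using False complex_norm_square[of v] by (simp add: field_simps power2_eq_square mult.commute)
    then show "Re (cnj v / of_real (norm v) * v) = norm v" by simp
  qed
qed

lemma A3:
  fixes a b q :: complex and C :: real
  assumes q: "norm q < 1" and C: "C > 0"
    and h1: "\<And>z. norm z = 1 \<Longrightarrow> norm (of_real C*q*z - a) < norm (b*z - of_real C)"
    and h2: "\<And>z. norm z = 1 \<Longrightarrow> norm (of_real C*q*z - b) < norm (a*z - of_real C)"
  shows "norm (a - q*cnj b) + norm (b - q*cnj a) < C*(1 - (norm q)^2)"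
proof -
  obtain z where z: "norm z = 1" "Re (z*(b - q*cnj a)) = norm (b - q*cnj a)" using unit_rot by blast
  obtain w where w: "norm w = 1" "Re (w*(a - q*cnj b)) = norm (a - q*cnj b)" using unit_rot by blast
  have "(norm (of_real C*q*z - a))^2 < (norm (b*z - of_real C))^2"
    using h1[OF z(1)] by (intro power_strict_mono) auto
  then have "(norm (b*z - of_real C))^2 - (norm (of_real C*q*z - a))^2 > 0" by simp
  then have 1: "C^2*(1 - (norm q)^2) - ((norm a)^2 - (norm b)^2) - 2*C*norm (b - q*cnj a) > 0"
    using I1[OF z(1), of b C q a] z(2) by simp
  have "(norm (of_real C*q*w - b))^2 < (norm (a*w - of_real C))^2"
    using h2[OF w(1)] by (intro power_strict_mono) auto
  then have "(norm (a*w - of_real C))^2 - (norm (of_real C*q*w - b))^2 > 0" by simp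
  then have 2: "C^2*(1 - (norm q)^2) - ((norm b)^2 - (norm a)^2) - 2*C*norm (a - q*cnj b) > 0"
    using I1[OF w(1), of a C q b] w(2) by simp
  define X where "X = norm (a - q*cnj b)"
  define Y where "Y = norm (b - q*cnj a)"
  define K where "K = 1 - (norm q)^2"
  have 3: "0 < (C^2*K - ((norm a)^2 - (norm b)^2) - 2*C*Y) + (C^2*K - ((norm b)^2 - (norm a)^2) - 2*C*X)"
    using add_pos_pos[OF 1 2] unfolding X_def Y_def K_def .
  have "(C^2*K - ((norm a)^2 - (norm b)^2) - 2*C*Y) + (C^2*K - ((norm b)^2 - (norm a)^2) - 2*C*X)
     = 2*(C*(C*K)) - 2*(C*(X+Y))" unfolding power2_eq_square by algebra
  then have "C*(X+Y) < C*(C*K)" using 3 by linarith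
  then have "X+Y < C*K" using C mult_less_cancel_left_pos by blast
  then show ?thesis unfolding X_def Y_def K_def .
qed

lemma G_suff:
  fixes x :: "nat \<Rightarrow> complex"
  assumes q: "norm (x n) < 1"
    and h: "\<And>j. j \<in> {1..n-1} \<Longrightarrow> norm (x j - x n * cnj (x (n-j))) + norm (x (n-j) - x n * cnj (x j))
              < real (n choose j) * (1 - (norm (x n))^2)"
  shows "x \<in> tetra_G n"
proof -
  define K where "K = 1 - (norm (x n))^2"
  have K: "K > 0" using q unfolding K_def by (simp add: power_less_one_iff abs_square_less_1)
  define \<beta> where "\<beta> = (\<lambda>j. (x j - x n * cnj (x (n-j))) / of_real K)"
  have qq: "x n * cnj (x n) = of_real ((norm (x n))^2)" using complex_norm_square[of "x n"] by simp
  have "\<forall>j\<in>{1..n-1}. x j = \<beta> j + cnj (\<beta> (n - j)) * x n \<and>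
        norm (\<beta> j) + norm (\<beta> (n - j)) < real (n choose j)"
  proof
    fix j assume j: "j \<in> {1..n-1}"
    then have nj: "n - (n - j) = j" by auto
    have "\<beta> j + cnj (\<beta> (n - j)) * x n
        = (x j - x n * cnj (x (n-j)) + (cnj (x (n-j)) - cnj (x n) * x j) * x n) / of_real K"
      unfolding \<beta>_def nj using K by (simp add: field_simps)
    also have "\<dots> = (x j * (1 - x n * cnj (x n))) / of_real K"
      by (simp add: algebra_simps)
    also have "\<dots> = x j"
    proof -
      have "1 - x n * cnj (x n) = of_real K" using qq unfolding K_def by simp
      then show ?thesis using K by simp
    qed
    finally have 1: "x j = \<beta> j + cnj (\<beta> (n - j)) * x n" ..
    have "norm (\<beta> j) + norm (\<beta> (n - j))
         = (norm (x j - x n * cnj (x (n-j))) + norm (x (n-j) - x n * cnj (x j))) / K"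
      unfolding \<beta>_def nj using K by (simp add: norm_divide add_divide_distrib)
    also have "\<dots> < real (n choose j)" using h[OF j] K unfolding K_def by (simp add: divide_less_eq)
    finally show "x j = \<beta> j + cnj (\<beta> (n - j)) * x n \<and>
        norm (\<beta> j) + norm (\<beta> (n - j)) < real (n choose j)" using 1 by blast
  qed
  then show ?thesis unfolding tetra_G_def using q by auto
qed

lemma G_nec:
  fixes x :: "nat \<Rightarrow> complex"
  assumes "x \<in> tetra_G n"
  shows "norm (x n) < 1"
    "\<And>j. j \<in> {1..n-1} \<Longrightarrow> norm (x j - x n * cnj (x (n-j))) + norm (x (n-j) - x n * cnj (x j))
              < real (n choose j) * (1 - (norm (x n))^2)"
proof -
  from assms obtain \<beta> :: "nat \<Rightarrow> complex" where q: "norm (x n) < 1" and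
    b: "\<forall>j\<in>{1..n-1}. x j = \<beta> j + cnj (\<beta> (n - j)) * x n \<and>
        norm (\<beta> j) + norm (\<beta> (n - j)) < real (n choose j)"
    unfolding tetra_G_def by auto
  show "norm (x n) < 1" by fact
  define K where "K = 1 - (norm (x n))^2"
  have K: "K > 0" using q unfolding K_def by (simp add: power_less_one_iff abs_square_less_1)
  have qq: "x n * cnj (x n) = of_real ((norm (x n))^2)" using complex_norm_square[of "x n"] by simp
  fix j assume j: "j \<in> {1..n-1}"
  then have nj: "n - (n - j) = j" and j': "n - j \<in> {1..n-1}" by auto
  have e1: "x j = \<beta> j + cnj (\<beta> (n - j)) * x n" using b j by blast
  have e2: "x (n-j) = \<beta> (n-j) + cnj (\<beta> j) * x n" using b j' nj by fastforce
  have "x j - x n * cnj (x (n-j)) = \<beta> j * (1 - x n * cnj (x n))"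
    unfolding e1 e2 by (simp add: algebra_simps)
  also have "\<dots> = \<beta> j * of_real K" using qq unfolding K_def by simp
  finally have u: "norm (x j - x n * cnj (x (n-j))) = norm (\<beta> j) * K" using K by (simp add: norm_mult)
  have "x (n-j) - x n * cnj (x j) = \<beta> (n-j) * (1 - x n * cnj (x n))"
    unfolding e1 e2 by (simp add: algebra_simps)
  also have "\<dots> = \<beta> (n-j) * of_real K" using qq unfolding K_def by simp
  finally have v: "norm (x (n-j) - x n * cnj (x j)) = norm (\<beta> (n-j)) * K" using K by (simp add: norm_mult)
  have "(norm (\<beta> j) + norm (\<beta> (n - j))) * K < real (n choose j) * K"
    using b j K by (intro mult_strict_right_mono) auto
  then show "norm (x j - x n * cnj (x (n-j))) + norm (x (n-j) - x n * cnj (x j))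
              < real (n choose j) * (1 - (norm (x n))^2)"
    unfolding u v K_def by (simp add: algebra_simps)
qed

lemma Gamma_nec:
  fixes x :: "nat \<Rightarrow> complex"
  assumes "x \<in> tetra_Gamma n"
  shows "norm (x n) \<le> 1"
    "\<And>j. j \<in> {1..n-1} \<Longrightarrow> norm (x j - x n * cnj (x (n-j))) + norm (x (n-j) - x n * cnj (x j))
              \<le> real (n choose j) * (1 - (norm (x n))^2)"
proof -
  define S where "S = {x :: nat \<Rightarrow> complex. norm (x n) \<le> 1} \<inter>
     (\<Inter>j\<in>{1..n-1}. {x. norm (x j - x n * cnj (x (n-j))) + norm (x (n-j) - x n * cnj (x j))
              \<le> real (n choose j) * (1 - (norm (x n))^2)})"
  have cc[continuous_intros]: "continuous_on UNIV (\<lambda>x :: nat \<Rightarrow> complex. x i)" for i by simp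
  have "closed S" unfolding S_def
    by (intro closed_Int closed_INT ballI closed_Collect_le continuous_intros)
  moreover have "tetra_G n \<subseteq> S"
  proof
    fix x assume x: "x \<in> tetra_G n"
    show "x \<in> S" unfolding S_def using G_nec[OF x] by (auto intro: less_imp_le)
  qed
  ultimately have "tetra_Gamma n \<subseteq> S" unfolding tetra_Gamma_def by (rule closure_minimal[rotated])
  then have "x \<in> S" using assms by blast
  then show "norm (x n) \<le> 1"
    "\<And>j. j \<in> {1..n-1} \<Longrightarrow> norm (x j - x n * cnj (x (n-j))) + norm (x (n-j) - x n * cnj (x j))
              \<le> real (n choose j) * (1 - (norm (x n))^2)" unfolding S_def by auto
qed

lemma maxp:
  fixes f :: "complex \<Rightarrow> complex"
  assumes hol: "f holomorphic_on ball 0 1" and le: "\<And>z. z \<in> ball 0 1 \<Longrightarrow> norm (f z) \<le> 1"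
    and z0: "z0 \<in> ball 0 1" "norm (f z0) < 1" and w: "w \<in> ball 0 1"
  shows "norm (f w) < 1"
proof (rule ccontr)
  assume "\<not> norm (f w) < 1"
  then have w1: "norm (f w) = 1" using le[OF w] by simp
  have "f constant_on ball 0 1"
    by (rule maximum_modulus_principle[OF hol open_ball connected_ball open_ball subset_refl w])
       (use le w1 in auto)
  then obtain c where "\<forall>x\<in>ball 0 1. f x = c" unfolding constant_on_def by blast
  then have "f z0 = f w" using z0 w by simp
  then show False using z0 w1 by simp
qed

theorem mainTheorem11:
  fixes n :: nat and \<psi> :: "complex \<Rightarrow> nat \<Rightarrow> complex" and z\<^sub>0 :: complex
  assumes "n \<ge> 2"
    and "\<And>j. j \<in> {1..n} \<Longrightarrow> (\<lambda>z. \<psi> z j) analytic_on ball 0 1"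
    and "\<And>z. z \<in> ball 0 1 \<Longrightarrow> \<psi> z \<in> tetra_Gamma n"
    and "z\<^sub>0 \<in> ball 0 1" and "\<psi> z\<^sub>0 \<in> tetra_G n"
  shows "\<psi> ` ball 0 1 \<subseteq> tetra_G n"
proof -
  note an = assms(2) and Gam = assms(3) and z0 = assms(4) and G0 = assms(5)
  have hol: "(\<lambda>z. \<psi> z j) holomorphic_on ball 0 1" if "j \<in> {1..n}" for j
    using an[OF that] by (simp add: analytic_imp_holomorphic)
  have n1: "n \<in> {1..n}" using assms(1) by auto
  have q: "norm (\<psi> w n) < 1" if w: "w \<in> ball 0 1" for w
    by (rule maxp[OF hol[OF n1] _ z0 _ w]) (use Gam Gamma_nec(1) G_nec(1)[OF G0] in auto)
  have Cpos: "real (n choose j) > 0" if "j \<in> {1..n-1}" for j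
  proof -
    have "j \<le> n" using that by auto
    then show ?thesis by simp
  qed
  have jrange: "j \<in> {1..n}" "n - j \<in> {1..n}" "n - j \<in> {1..n-1}" "n - (n - j) = j"
    if "j \<in> {1..n-1}" for j using that by auto
  have b: "norm (\<psi> w (n-j)) < real (n choose j)" if w: "w \<in> ball 0 1" and j: "j \<in> {1..n-1}" for w j
  proof -
    let ?C = "real (n choose j)"
    have "norm (\<psi> w (n-j) / of_real ?C) < 1"
    proof (rule maxp[where f = "\<lambda>w. \<psi> w (n-j) / of_real ?C", OF _ _ z0 _ w])
      show "(\<lambda>w. \<psi> w (n - j) / complex_of_real ?C) holomorphic_on ball 0 1"
        using hol[OF jrange(2)[OF j]] Cpos[OF j] by (intro holomorphic_intros) auto
      fix z :: complex assume z: "z \<in> ball 0 1"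
      have "norm (\<psi> z (n-j)) \<le> ?C"
        by (rule A1(1)[OF q[OF z] Cpos[OF j] Gamma_nec(2)[OF Gam[OF z] j]])
      then show "norm (\<psi> z (n - j) / complex_of_real ?C) \<le> 1" using Cpos[OF j] by (simp add: norm_divide)
    next
      have "norm (\<psi> z\<^sub>0 (n-j)) < ?C"
        by (rule A2(1)[OF G_nec(1)[OF G0] Cpos[OF j] G_nec(2)[OF G0 j]])
      then show "norm (\<psi> z\<^sub>0 (n - j) / complex_of_real ?C) < 1" using Cpos[OF j] by (simp add: norm_divide)
    qed
    then show ?thesis using Cpos[OF j] by (simp add: norm_divide)
  qed
  have g: "norm (of_real (real (n choose j)) * \<psi> w n * z - \<psi> w j) < norm (\<psi> w (n-j) * z - of_real (real (n choose j)))"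
    if w: "w \<in> ball 0 1" and j: "j \<in> {1..n-1}" and z: "norm z = 1" for w j z
  proof -
    let ?C = "real (n choose j)"
    have den: "\<psi> u (n-j) * z - of_real ?C \<noteq> 0" if u: "u \<in> ball 0 1" for u
    proof
      assume "\<psi> u (n-j) * z - of_real ?C = 0"
      then have "norm (\<psi> u (n-j) * z) = ?C" by simp
      then show False using b[OF u j] z by (simp add: norm_mult)
    qed
    have "norm ((of_real ?C * \<psi> w n * z - \<psi> w j) / (\<psi> w (n-j) * z - of_real ?C)) < 1"
    proof (rule maxp[where f = "\<lambda>w. (of_real ?C * \<psi> w n * z - \<psi> w j) / (\<psi> w (n-j) * z - of_real ?C)", OF _ _ z0 _ w])
      show "(\<lambda>w. (of_real ?C * \<psi> w n * z - \<psi> w j) / (\<psi> w (n-j) * z - of_real ?C)) holomorphic_on ball 0 1"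
        using hol[OF jrange(2)[OF j]] hol[OF jrange(1)[OF j]] hol[OF n1] den
        by (intro holomorphic_intros) auto
      fix u :: complex assume u: "u \<in> ball 0 1"
      have "norm (of_real ?C * \<psi> u n * z - \<psi> u j) \<le> norm (\<psi> u (n-j) * z - of_real ?C)"
        by (rule A1(2)[OF q[OF u] Cpos[OF j] Gamma_nec(2)[OF Gam[OF u] j] z])
      then show "norm ((of_real ?C * \<psi> u n * z - \<psi> u j) / (\<psi> u (n-j) * z - of_real ?C)) \<le> 1"
        using den[OF u] by (simp add: norm_divide divide_le_eq_1)
    next
      have "norm (of_real ?C * \<psi> z\<^sub>0 n * z - \<psi> z\<^sub>0 j) < norm (\<psi> z\<^sub>0 (n-j) * z - of_real ?C)"
        by (rule A2(2)[OF G_nec(1)[OF G0] Cpos[OF j] G_nec(2)[OF G0 j] z])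
      then show "norm ((of_real ?C * \<psi> z\<^sub>0 n * z - \<psi> z\<^sub>0 j) / (\<psi> z\<^sub>0 (n-j) * z - of_real ?C)) < 1"
        using den[OF z0] by (simp add: norm_divide divide_less_eq_1)
    qed
    then show ?thesis using den[OF w] by (simp add: norm_divide divide_less_eq_1)
  qed
  show ?thesis
  proof
    fix x assume "x \<in> \<psi> ` ball 0 1"
    then obtain w where w: "w \<in> ball 0 1" and x: "x = \<psi> w" by blast
    show "x \<in> tetra_G n" unfolding x
    proof (rule G_suff[where x="\<psi> w" and n=n, OF q[OF w]])
      fix j assume j: "j \<in> {1..n-1}"
      have jn: "j \<le> n" using j by auto
      have Cs: "n choose (n - j) = n choose j" using binomial_symmetric[OF jn] by simp
      show "norm (\<psi> w j - \<psi> w n * cnj (\<psi> w (n - j))) + norm (\<psi> w (n - j) - \<psi> w n * cnj (\<psi> w j))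
          < real (n choose j) * (1 - (norm (\<psi> w n))\<^sup>2)"
      proof (rule A3[OF q[OF w] Cpos[OF j]])
        fix z :: complex assume z: "norm z = 1"
        show "norm (of_real (real (n choose j)) * \<psi> w n * z - \<psi> w j) < norm (\<psi> w (n-j) * z - of_real (real (n choose j)))"
          by (rule g[OF w j z])
        show "norm (of_real (real (n choose j)) * \<psi> w n * z - \<psi> w (n-j)) < norm (\<psi> w j * z - of_real (real (n choose j)))"
          using g[OF w jrange(3)[OF j] z] unfolding jrange(4)[OF j] Cs .
      qed
    qed
  qed
qed

end
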